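(* Let $\bm{\gamma}$ be a model such that $\bm{X}_{\bm{\gamma}}$ has full column rank, and let $\tilde{\bm{\gamma}}\subseteq\bm{\gamma}^*$ with $\tilde{\bm{\gamma}}\not\subseteq\bm{\gamma}$. Then $$\mu(\bm{\gamma}\cup\tilde{\bm{\gamma}},\bm{\gamma})\ge n\,\phi^{-1}\rho(\bm{X})\sum_{b=1}^B|\tilde{\bm{\gamma}}_b\setminus\bm{\gamma}_b|\min_{i\in\tilde{\bm{\gamma}}_b\setminus\bm{\gamma}_b}(\theta^*_i)^2,$$ where terms with $\tilde{\bm{\gamma}}_b\setminus\bm{\gamma}_b=\emptyset$ are zero.
   Context: $\bm{X}\in\mathbb{R}^{n\times p}$, $\bm{\theta}^*\in\mathbb{R}^p$, $\phi>0$, true support $\bm{\gamma}^*=\{j:\theta^*_j\ne0\}$; each index $j$ has a block label $z_j\in\{1,\ldots,B\}$ and for an index set $\bm{\gamma}$, $\bm{\gamma}_b=\{j\in\bm{\gamma}:z_j=b\}$. $\bm{X}_{\bm{\gamma}}$ denotes the columns indexed by $\bm{\gamma}$, $\bm{\theta}^*_{\bm{\gamma}}$ the corresponding entries, $P_{\bm{\gamma}}=\bm{X}_{\bm{\gamma}}(\bm{X}_{\bm{\gamma}}^T\bm{X}_{\bm{\gamma}})^{-1}\bm{X}_{\bm{\gamma}}^T$. For models $\bm{\gamma},\tilde{\bm{\gamma}}$: $\mu(\bm{\gamma},\tilde{\bm{\gamma}})=\phi^{-1}\|(I_n-P_{\tilde{\bm{\gamma}}})\bm{X}_{\bm{\gamma}\setminus\tilde{\bm{\gamma}}}\bm{\theta}^*_{\bm{\gamma}\setminus\tilde{\bm{\gamma}}}\|^2$.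 $\rho(\bm{X})=\min_{\bm{\gamma}:\bm{\gamma}\not\supseteq\bm{\gamma}^*}\lambda_{\min}\big(\tfrac1n\bm{X}_{\bm{\gamma}^*\setminus\bm{\gamma}}^T(I-P_{\bm{\gamma}})\bm{X}_{\bm{\gamma}^*\setminus\bm{\gamma}}\big)$, minimum over the considered models (those with $\bm{X}_{\bm{\gamma}}$ of full column rank), which include $\bm{\gamma}$. *)

theory Defs
  imports "Jordan_Normal_Form.DL_Rank" "Jordan_Normal_Form.DL_Submatrix"
          "Jordan_Normal_Form.Gauss_Jordan_Elimination" "Jordan_Normal_Form.Char_Poly"
begin

text \<open>Design matrix X is an n x p real matrix (dim_row X = n, dim_col X = p);
  column/coordinate indices are 0..p-1.  Models are sets of column indices.\<close>

definition colsub :: "real mat \<Rightarrow> nat set \<Rightarrow> real mat" where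
  "colsub X g = submatrix X UNIV g"

definition vsub :: "real vec \<Rightarrow> nat set \<Rightarrow> real vec" where
  "vsub v g = vec (card {j. j < dim_vec v \<and> j \<in> g}) (\<lambda>i. v $ pick g i)"

definition full_col_rank :: "real mat \<Rightarrow> nat set \<Rightarrow> bool" where
  "full_col_rank X g = (vec_space.rank (dim_row X) (colsub X g) = dim_col (colsub X g))"

definition proj :: "real mat \<Rightarrow> nat set \<Rightarrow> real mat" where
  "proj X g = (let A = colsub X g in A * the (mat_inverse (A\<^sup>T * A)) * A\<^sup>T)"

definition sqnorm :: "real vec \<Rightarrow> real" where
  "sqnorm v = v \<bullet> v"

definition mu :: "real mat \<Rightarrow> real vec \<Rightarrow> real \<Rightarrow> nat set \<Rightarrow> nat set \<Rightarrow> real" where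
  "mu X \<theta> \<phi> g g' = (1 / \<phi>) * sqnorm ((1\<^sub>m (dim_row X) - proj X g') *\<^sub>v
      (colsub X (g - g') *\<^sub>v vsub \<theta> (g - g')))"

definition supp :: "real vec \<Rightarrow> nat set" where
  "supp \<theta> = {j. j < dim_vec \<theta> \<and> \<theta> $ j \<noteq> 0}"

definition lambda_min :: "real mat \<Rightarrow> real" where
  "lambda_min A = Min {k. eigenvalue A k}"

definition rho :: "real mat \<Rightarrow> real vec \<Rightarrow> nat set set \<Rightarrow> real" where
  "rho X \<theta> M = Min {lambda_min ((1 / real (dim_row X)) \<cdot>\<^sub>m
        ((colsub X (supp \<theta> - g))\<^sup>T * (1\<^sub>m (dim_row X) - proj X g) * colsub X (supp \<theta> - g)))
      | g. g \<in> M \<and> \<not> supp \<theta> \<subseteq> g}"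

definition blk :: "(nat \<Rightarrow> nat) \<Rightarrow> nat set \<Rightarrow> nat \<Rightarrow> nat set" where
  "blk z g b = {j \<in> g. z j = b}"

end

theory Submission
  imports Defs
begin

lemma sq_le_sqnorm:
  fixes x :: "real vec"
  assumes "x \<in> carrier_vec k" "i < k"
  shows "(x $ i)^2 \<le> x \<bullet> x"
proof -
  have "x \<bullet> x = (\<Sum>j\<in>{0..<k}. (x $ j)^2)" using assms unfolding scalar_prod_def
    by (simp add: power2_eq_square)
  also have "(x $ i)^2 \<le> \<dots>" by (rule member_le_sum) (use assms in auto)
  finally show ?thesis .
qed

lemma abs_prod_le_sqnorm:
  fixes x :: "real vec"
  assumes "x \<in> carrier_vec k" "i < k" "j < k"
  shows "\<bar>x $ i * x $ j\<bar> \<le> x \<bullet> x"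
proof -
  have "\<bar>x $ i * x $ j\<bar> \<le> ((x $ i)^2 + (x $ j)^2) / 2"
  proof -
    have "0 \<le> (\<bar>x $ i\<bar> - \<bar>x $ j\<bar>)^2" by simp
    then show ?thesis by (simp add: power2_eq_square abs_mult algebra_simps)
  qed
  also have "\<dots> \<le> x \<bullet> x" using sq_le_sqnorm[OF assms(1,2)] sq_le_sqnorm[OF assms(1,3)] by simp
  finally show ?thesis .
qed

lemma quad_bound:
  fixes M :: "real mat"
  assumes M: "M \<in> carrier_mat k k"
  shows "\<exists>C\<ge>0. \<forall>x\<in>carrier_vec k. \<bar>x \<bullet> (M *\<^sub>v x)\<bar> \<le> C * (x \<bullet> x)"
proof (intro exI[of _ "\<Sum>i<k. \<Sum>j<k. \<bar>M $$ (i,j)\<bar>"] conjI ballI)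
  show "0 \<le> (\<Sum>i<k. \<Sum>j<k. \<bar>M $$ (i,j)\<bar>)" by (intro sum_nonneg) auto
  fix x :: "real vec" assume x: "x \<in> carrier_vec k"
  have "x \<bullet> (M *\<^sub>v x) = (\<Sum>i<k. \<Sum>j<k. M $$ (i,j) * (x $ i * x $ j))"
    using M x unfolding scalar_prod_def mult_mat_vec_def
    by (auto simp: sum_distrib_left row_def lessThan_atLeast0 intro!: sum.cong)
  also have "\<bar>\<dots>\<bar> \<le> (\<Sum>i<k. \<Sum>j<k. \<bar>M $$ (i,j) * (x $ i * x $ j)\<bar>)"
    by (rule order_trans[OF sum_abs]) (intro sum_mono sum_abs)
  also have "\<dots> \<le> (\<Sum>i<k. \<Sum>j<k. \<bar>M $$ (i,j)\<bar> * (x \<bullet> x))"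
  proof (intro sum_mono)
    fix i j assume "i \<in> {..<k}" "j \<in> {..<k}"
    then have "\<bar>x $ i * x $ j\<bar> \<le> x \<bullet> x" using abs_prod_le_sqnorm[OF x] by auto
    then show "\<bar>M $$ (i,j) * (x $ i * x $ j)\<bar> \<le> \<bar>M $$ (i,j)\<bar> * (x \<bullet> x)"
      unfolding abs_mult[of "M $$ (i,j)"] by (rule mult_left_mono) auto
  qed
  also have "\<dots> = (\<Sum>i<k. \<Sum>j<k. \<bar>M $$ (i,j)\<bar>) * (x \<bullet> x)"
    by (simp add: sum_distrib_right)
  finally show "\<bar>x \<bullet> (M *\<^sub>v x)\<bar> \<le> (\<Sum>i<k. \<Sum>j<k. \<bar>M $$ (i,j)\<bar>) * (x \<bullet> x)" .
qed


lemma sqn_nonneg: "0 \<le> (x :: real vec) \<bullet> x"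
  unfolding scalar_prod_def by (intro sum_nonneg) auto

lemma sqn_zero:
  fixes x :: "real vec"
  assumes "x \<in> carrier_vec k" "x \<bullet> x = 0"
  shows "x = 0\<^sub>v k"
proof (rule eq_vecI)
  fix i assume "i < dim_vec (0\<^sub>v k)"
  then have i: "i < k" by simp
  have "(\<Sum>j\<in>{0..<k}. x $ j * x $ j) = 0" using assms unfolding scalar_prod_def by simp
  then have "\<forall>j\<in>{0..<k}. x $ j * x $ j = 0"
    by (subst (asm) sum_nonneg_eq_0_iff) auto
  then show "x $ i = 0\<^sub>v k $ i" using i by auto
qed (use assms in auto)

lemma sqn_pos:
  fixes x :: "real vec"
  assumes "x \<in> carrier_vec k" "x \<noteq> 0\<^sub>v k"
  shows "0 < x \<bullet> x"
  using sqn_nonneg[of x] sqn_zero[OF assms(1)] assms(2) by force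

lemma norm_bound:
  fixes A :: "real mat"
  assumes A: "A \<in> carrier_mat a b"
  shows "\<exists>C\<ge>0. \<forall>x\<in>carrier_vec b. (A *\<^sub>v x) \<bullet> (A *\<^sub>v x) \<le> C * (x \<bullet> x)"
proof -
  have G: "A\<^sup>T * A \<in> carrier_mat b b" using A by auto
  obtain C where C: "C \<ge> 0" "\<forall>x\<in>carrier_vec b. \<bar>x \<bullet> ((A\<^sup>T * A) *\<^sub>v x)\<bar> \<le> C * (x \<bullet> x)"
    using quad_bound[OF G] by blast
  have "(A *\<^sub>v x) \<bullet> (A *\<^sub>v x) \<le> C * (x \<bullet> x)" if x: "x \<in> carrier_vec b" for x
  proof -
    have "(A *\<^sub>v x) \<bullet> (A *\<^sub>v x) = (A\<^sup>T *\<^sub>v (A *\<^sub>v x)) \<bullet> x"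
      using transpose_vec_mult_scalar[OF A x, of "A *\<^sub>v x"] A x by auto
    also have "\<dots> = x \<bullet> ((A\<^sup>T * A) *\<^sub>v x)"
      using A x by (subst comm_scalar_prod[of _ b]) auto
    finally show ?thesis using C(2) x by force
  qed
  then show ?thesis using C(1) by blast
qed

lemma smat_one_mult:
  fixes m :: real
  assumes "x \<in> carrier_vec k"
  shows "(m \<cdot>\<^sub>m 1\<^sub>m k) *\<^sub>v x = m \<cdot>\<^sub>v x"
  apply (intro eq_vecI)
  using assms apply (auto simp: mult_mat_vec_def scalar_prod_def row_def)
  apply (subst sum.cong[OF refl, of _ _ "\<lambda>ia. if i = ia then m * x $ ia else 0"])
  apply auto
  done

lemma rayleigh_aux:
  fixes A :: "real mat"
  assumes A: "A \<in> carrier_mat k k" and sym: "A\<^sup>T = A" and k: "0 < k"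
  shows "\<exists>m. eigenvalue A m \<and> (\<forall>x\<in>carrier_vec k. m * (x \<bullet> x) \<le> x \<bullet> (A *\<^sub>v x))"
proof -
  obtain C where C: "C \<ge> 0" "\<forall>x\<in>carrier_vec k. \<bar>x \<bullet> (A *\<^sub>v x)\<bar> \<le> C * (x \<bullet> x)"
    using quad_bound[OF A] by blast
  define S where "S = {x \<bullet> (A *\<^sub>v x) | x. x \<in> carrier_vec k \<and> x \<bullet> x = 1}"
  have e0: "(unit_vec k 0 :: real vec) \<in> carrier_vec k" "(unit_vec k 0 :: real vec) \<bullet> unit_vec k 0 = 1"
    using k by (auto simp: scalar_prod_left_unit[of "unit_vec k 0" k 0])
  then have Sne: "S \<noteq> {}" unfolding S_def by blast
  have bdd: "bdd_below S"
  proof (rule bdd_belowI[of _ "-C"])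
    fix s assume "s \<in> S"
    then obtain x where "x \<in> carrier_vec k" "x \<bullet> x = 1" "s = x \<bullet> (A *\<^sub>v x)" unfolding S_def by blast
    then show "-C \<le> s" using C(2) by force
  qed
  define m where "m = Inf S"
  have low: "m * (x \<bullet> x) \<le> x \<bullet> (A *\<^sub>v x)" if x: "x \<in> carrier_vec k" for x
  proof (cases "x = 0\<^sub>v k")
    case True then show ?thesis using x A by simp
  next
    case False
    define s where "s = sqrt (x \<bullet> x)"
    have pos: "0 < x \<bullet> x" using sqn_pos[OF x False] .
    then have s: "0 < s" "s * s = x \<bullet> x" unfolding s_def by (auto simp: real_sqrt_mult[symmetric])
    define u where "u = (1/s) \<cdot>\<^sub>v x"
    have u: "u \<in> carrier_vec k" using x unfolding u_def by simp
    have uu: "u \<bullet> u = (x \<bullet> x) / (s * s)" unfolding u_def using x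
      by (simp add: smult_scalar_prod_distrib[of _ k] scalar_prod_smult_distrib[of _ k])
    have uAu: "u \<bullet> (A *\<^sub>v u) = (x \<bullet> (A *\<^sub>v x)) / (s * s)" unfolding u_def using x A
      by (simp add: mult_mat_vec[OF A x] smult_scalar_prod_distrib[of _ k] scalar_prod_smult_distrib[of _ k])
    have "u \<bullet> (A *\<^sub>v u) \<in> S" unfolding S_def using u uu s pos by auto
    then have "m \<le> (x \<bullet> (A *\<^sub>v x)) / (s * s)" unfolding m_def using cInf_lower[OF _ bdd] uAu by auto
    then show ?thesis using s pos by (simp add: pos_le_divide_eq)
  qed
  define B where "B = A - m \<cdot>\<^sub>m 1\<^sub>m k"
  have B: "B \<in> carrier_mat k k" unfolding B_def using A by auto
  have Bx: "B *\<^sub>v x = A *\<^sub>v x - m \<cdot>\<^sub>v x" if "x \<in> carrier_vec k" for x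
    unfolding B_def using that A by (subst minus_mult_distrib_mat_vec[of _ k k]) (auto simp: smat_one_mult)
  have psd: "0 \<le> x \<bullet> (B *\<^sub>v x)" if x: "x \<in> carrier_vec k" for x
    using low[OF x] x A by (simp add: Bx scalar_prod_minus_distrib[of _ k] scalar_prod_smult_distrib[of _ k])
  have "(m \<cdot>\<^sub>m 1\<^sub>m k)\<^sup>T = m \<cdot>\<^sub>m 1\<^sub>m k" by (intro eq_matI) auto
  then have Bsym: "B\<^sup>T = B" unfolding B_def using A sym by (simp add: transpose_minus)
  have detB: "det B = 0"
  proof (rule ccontr)
    assume "det B \<noteq> 0"
    then have "B \<in> Units (ring_mat TYPE(real) k ())" by (rule det_non_zero_imp_unit[OF B])
    then obtain Bi where "mat_inverse B = Some Bi" using mat_inverse(1)[OF B, of "()"] by (cases "mat_inverse B") auto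
    then have Bi: "Bi * B = 1\<^sub>m k" "Bi \<in> carrier_mat k k" using mat_inverse(2)[OF B] by auto
    obtain C2 where C2: "C2 \<ge> 0" "\<forall>x\<in>carrier_vec k. (Bi *\<^sub>v x) \<bullet> (Bi *\<^sub>v x) \<le> C2 * (x \<bullet> x)"
      using norm_bound[OF Bi(2)] by blast
    obtain K0 where K0: "K0 \<ge> 0" "\<forall>x\<in>carrier_vec k. \<bar>x \<bullet> (B *\<^sub>v x)\<bar> \<le> K0 * (x \<bullet> x)"
      using quad_bound[OF B] by blast
    define K where "K = K0 + 1"
    have K: "K > 0" unfolding K_def using K0 by simp
    define c where "c = 1 / ((C2 + 1) * K)"
    have c: "c > 0" unfolding c_def using K C2 by simp
    have key: "c * (x \<bullet> x) \<le> x \<bullet> (B *\<^sub>v x)" if x: "x \<in> carrier_vec k" for x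
    proof -
      define y where "y = B *\<^sub>v x"
      have y: "y \<in> carrier_vec k" unfolding y_def using B x by simp
      have By: "B *\<^sub>v y \<in> carrier_vec k" using B y by simp
      have "x = Bi *\<^sub>v y" unfolding y_def using Bi B x by (simp add: assoc_mult_mat_vec[symmetric, of _ k k _ k])
      then have xx: "x \<bullet> x \<le> (C2 + 1) * (y \<bullet> y)" using C2 y sqn_nonneg[of y]
        by (smt (verit, best) mult_right_mono)
      have yBy: "y \<bullet> (B *\<^sub>v y) \<le> K * (y \<bullet> y)" using K0(2) y sqn_nonneg[of y] unfolding K_def
        by (smt (verit, best) mult_right_mono distrib_right abs_le_D1 mult_cancel_right1)
      define t where "t = 1 / K"
      define w where "w = x - t \<cdot>\<^sub>v y"
      have w: "w \<in> carrier_vec k" unfolding w_def using x y by simp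
      have Bw: "B *\<^sub>v w = y - t \<cdot>\<^sub>v (B *\<^sub>v y)" unfolding w_def y_def
        using B x by (simp add: mult_minus_distrib_mat_vec[of _ k k] mult_mat_vec[OF B])
      have xBy: "x \<bullet> (B *\<^sub>v y) = y \<bullet> y"
      proof -
        have "x \<bullet> (B *\<^sub>v y) = (B\<^sup>T *\<^sub>v y) \<bullet> x"
          using x By B y by (subst comm_scalar_prod[of _ k]) (auto simp: Bsym)
        also have "\<dots> = y \<bullet> y" unfolding y_def using transpose_vec_mult_scalar[OF B x, of "B *\<^sub>v x"] B x by simp
        finally show ?thesis .
      qed
      have xy: "x \<bullet> y = x \<bullet> (B *\<^sub>v x)" unfolding y_def ..
      have yx: "y \<bullet> x = x \<bullet> y" using x y by (simp add: comm_scalar_prod[of _ k])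
      have "w \<bullet> (B *\<^sub>v w) = x \<bullet> y - t * (x \<bullet> (B *\<^sub>v y)) - t * (y \<bullet> y) + t * t * (y \<bullet> (B *\<^sub>v y))"
        unfolding Bw unfolding w_def using x y By
        by (simp add: minus_scalar_prod_distrib[of _ k] scalar_prod_minus_distrib[of _ k]
            smult_scalar_prod_distrib[of _ k] scalar_prod_smult_distrib[of _ k] algebra_simps)
      also have "\<dots> = x \<bullet> (B *\<^sub>v x) - 2 * t * (y \<bullet> y) + t * t * (y \<bullet> (B *\<^sub>v y))"
        using xBy xy yx by simp
      also have "\<dots> \<le> x \<bullet> (B *\<^sub>v x) - 2 * t * (y \<bullet> y) + t * t * (K * (y \<bullet> y))"
        using yBy by (simp add: mult_left_mono)
      also have "\<dots> = x \<bullet> (B *\<^sub>v x) - (y \<bullet> y) / K" unfolding t_def using K by (simp add: field_simps)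
      finally have "(y \<bullet> y) / K \<le> x \<bullet> (B *\<^sub>v x)" using psd[OF w] by simp
      moreover have "c * (x \<bullet> x) \<le> (y \<bullet> y) / K" 
      proof -
        have "(x \<bullet> x) / (C2 + 1) \<le> y \<bullet> y" using xx C2 by (simp add: pos_divide_le_eq mult.commute)
        then have "(x \<bullet> x) / (C2 + 1) / K \<le> (y \<bullet> y) / K" using K by (simp add: divide_right_mono del: divide_divide_eq_left)
        then show ?thesis unfolding c_def by (simp add: divide_divide_eq_left)
      qed
      ultimately show ?thesis by linarith
    qed
    have "m + c \<le> m" unfolding m_def
    proof (rule cInf_greatest[OF Sne])
      fix s assume "s \<in> S"
      then obtain x where x: "x \<in> carrier_vec k" "x \<bullet> x = 1" "s = x \<bullet> (A *\<^sub>v x)" unfolding S_def by blast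
      have "x \<bullet> (B *\<^sub>v x) = s - Inf S" using x A m_def
        by (simp add: Bx scalar_prod_minus_distrib[of _ k] scalar_prod_smult_distrib[of _ k])
      then show "Inf S + c \<le> s" using key[OF x(1)] x(2) by simp
    qed
    then show False using c by simp
  qed
  obtain v where v: "v \<in> carrier_vec k" "v \<noteq> 0\<^sub>v k" "B *\<^sub>v v = 0\<^sub>v k"
    using det_0_iff_vec_prod_zero_field[OF B] detB by blast
  have "A *\<^sub>v v = m \<cdot>\<^sub>v v"
  proof -
    have "A *\<^sub>v v - m \<cdot>\<^sub>v v = 0\<^sub>v k" using Bx[OF v(1)] v(3) by simp
    note eq = this
    show ?thesis
    proof (rule eq_vecI)
      fix i assume i: "i < dim_vec (m \<cdot>\<^sub>v v)"
      then have "(A *\<^sub>v v - m \<cdot>\<^sub>v v) $ i = 0" using eq v(1) by simp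
      then show "(A *\<^sub>v v) $ i = (m \<cdot>\<^sub>v v) $ i" using i v(1) A by simp
    qed (use A v(1) in simp)
  qed
  then have "eigenvalue A m" unfolding eigenvalue_def eigenvector_def using v A by auto
  then show ?thesis using low by blast
qed


lemma lambda_min_bound:
  fixes A :: "real mat"
  assumes A: "A \<in> carrier_mat k k" and sym: "A\<^sup>T = A" and k: "0 < k" and x: "x \<in> carrier_vec k"
  shows "lambda_min A * (x \<bullet> x) \<le> x \<bullet> (A *\<^sub>v x)"
proof -
  obtain m where m: "eigenvalue A m" "\<forall>x\<in>carrier_vec k. m * (x \<bullet> x) \<le> x \<bullet> (A *\<^sub>v x)"
    using rayleigh_aux[OF A sym k] by blast
  have cp: "char_poly A \<noteq> 0" using degree_monic_char_poly[OF A] by auto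
  have "{e. eigenvalue A e} = {e. poly (char_poly A) e = 0}"
    using eigenvalue_root_char_poly[OF A] by auto
  then have fin: "finite {e. eigenvalue A e}" using poly_roots_finite[OF cp] by simp
  have "lambda_min A \<le> m" unfolding lambda_min_def using Min_le[OF fin] m(1) by simp
  then have "lambda_min A * (x \<bullet> x) \<le> m * (x \<bullet> x)" by (rule mult_right_mono) (rule sqn_nonneg)
  then show ?thesis using m(2) x by force
qed

lemma pick_bij:
  assumes "finite g"
  shows "bij_betw (pick g) {..<card g} g"
proof -
  have img: "pick g ` {..<card g} = g"
  proof
    show "pick g ` {..<card g} \<subseteq> g"
    proof
      fix x assume "x \<in> pick g ` {..<card g}"
      then obtain l where l: "l < card g" "x = pick g l" by auto
      have "l < card g \<or> infinite g" using l(1) by simp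
      from pick_in_set[OF this] show "x \<in> g" using l(2) by simp
    qed
    show "g \<subseteq> pick g ` {..<card g}"
    proof
      fix i assume i: "i \<in> g"
      have "{a\<in>g. a < i} \<subset> g" using i by auto
      then have c: "card {a\<in>g. a < i} < card g" using assms by (simp add: psubset_card_mono)
      have e: "pick g (card {a\<in>g. a < i}) = i" by (rule pick_card_in_set[OF i])
      show "i \<in> pick g ` {..<card g}"
        by (rule rev_image_eqI[of "card {a\<in>g. a < i}"]) (use c e in auto)
    qed
  qed
  have "card (pick g ` {..<card g}) = card {..<card g}" unfolding img by simp
  then have "inj_on (pick g) {..<card g}" by (rule eq_card_imp_inj_on[rotated]) simp
  then show ?thesis unfolding bij_betw_def using img by simp
qed

lemma sum_pick:
  assumes "finite g"
  shows "(\<Sum>l<card g. f (pick g l)) = (\<Sum>j\<in>g. f j)"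
  using sum.reindex_bij_betw[OF pick_bij[OF assms], of f] by simp

lemma card_filter_sub: "g \<subseteq> {0..<p} \<Longrightarrow> card {j. j < p \<and> j \<in> g} = card g"
  by (rule arg_cong[where f = card]) auto

lemma colsub_carrier:
  assumes X: "X \<in> carrier_mat n p" and g: "g \<subseteq> {0..<p}"
  shows "colsub X g \<in> carrier_mat n (card g)"
proof -
  have r: "card {i. i < dim_row X \<and> i \<in> UNIV} = n" using X by simp
  have c: "card {j. j < dim_col X \<and> j \<in> g} = card g" using card_filter_sub[OF g] X by simp
  show ?thesis unfolding colsub_def carrier_mat_def mem_Collect_eq dim_submatrix r c by simp
qed

lemma colsub_index:
  assumes X: "X \<in> carrier_mat n p" and g: "g \<subseteq> {0..<p}" and i: "i < n" and l: "l < card g"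
  shows "colsub X g $$ (i, l) = X $$ (i, pick g l)"
proof -
  have r: "card {i. i < dim_row X \<and> i \<in> UNIV} = n" using X by simp
  have c: "card {j. j < dim_col X \<and> j \<in> g} = card g" using card_filter_sub[OF g] X by simp
  show ?thesis unfolding colsub_def
    by (subst submatrix_index) (simp_all only: r c i l pick_UNIV)
qed

lemma vsub_carrier:
  assumes t: "\<theta> \<in> carrier_vec p" and g: "g \<subseteq> {0..<p}"
  shows "vsub \<theta> g \<in> carrier_vec (card g)"
proof -
  have c: "card {j. j < dim_vec \<theta> \<and> j \<in> g} = card g" using card_filter_sub[OF g] t by simp
  show ?thesis unfolding vsub_def c by simp
qed

lemma vsub_index:
  assumes t: "\<theta> \<in> carrier_vec p" and g: "g \<subseteq> {0..<p}" and l: "l < card g"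
  shows "vsub \<theta> g $ l = \<theta> $ pick g l"
proof -
  have c: "card {j. j < dim_vec \<theta> \<and> j \<in> g} = card g" using card_filter_sub[OF g] t by simp
  show ?thesis unfolding vsub_def c using l by simp
qed

lemma colsub_mult:
  assumes X: "X \<in> carrier_mat n p" and t: "\<theta> \<in> carrier_vec p" and g: "g \<subseteq> {0..<p}"
  shows "colsub X g *\<^sub>v vsub \<theta> g = vec n (\<lambda>i. \<Sum>j\<in>g. X $$ (i, j) * \<theta> $ j)"
proof (rule eq_vecI)
  have fin: "finite g" using g finite_subset by blast
  show "dim_vec (colsub X g *\<^sub>v vsub \<theta> g) = dim_vec (vec n (\<lambda>i. \<Sum>j\<in>g. X $$ (i, j) * \<theta> $ j))"
    using colsub_carrier[OF X g] by simp
  fix i assume "i < dim_vec (vec n (\<lambda>i. \<Sum>j\<in>g. X $$ (i, j) * \<theta> $ j))"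
  then have i: "i < n" by simp
  have "(colsub X g *\<^sub>v vsub \<theta> g) $ i = (\<Sum>l<card g. colsub X g $$ (i, l) * vsub \<theta> g $ l)"
    using colsub_carrier[OF X g] vsub_carrier[OF t g] i
    by (auto simp: mult_mat_vec_def scalar_prod_def lessThan_atLeast0)
  also have "\<dots> = (\<Sum>l<card g. X $$ (i, pick g l) * \<theta> $ pick g l)"
    using colsub_index[OF X g i] vsub_index[OF t g] by auto
  also have "\<dots> = (\<Sum>j\<in>g. X $$ (i, j) * \<theta> $ j)"
    using sum_pick[OF fin, of "\<lambda>j. X $$ (i, j) * \<theta> $ j"] by simp
  finally show "(colsub X g *\<^sub>v vsub \<theta> g) $ i = vec n (\<lambda>i. \<Sum>j\<in>g. X $$ (i, j) * \<theta> $ j) $ i"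
    using i by simp
qed

lemma vsub_sqn:
  assumes t: "\<theta> \<in> carrier_vec p" and g: "g \<subseteq> {0..<p}"
  shows "vsub \<theta> g \<bullet> vsub \<theta> g = (\<Sum>j\<in>g. (\<theta> $ j)^2)"
proof -
  have fin: "finite g" using g finite_subset by blast
  have "vsub \<theta> g \<bullet> vsub \<theta> g = (\<Sum>l<card g. (\<theta> $ pick g l)^2)"
    using vsub_carrier[OF t g] vsub_index[OF t g]
    by (auto simp: scalar_prod_def lessThan_atLeast0 power2_eq_square)
  also have "\<dots> = (\<Sum>j\<in>g. (\<theta> $ j)^2)" using sum_pick[OF fin, of "\<lambda>j. (\<theta> $ j)^2"] by simp
  finally show ?thesis .
qed

lemma (in vec_space) full_rank_ker:
  assumes A: "A \<in> carrier_mat n k" and r: "rank A = k"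
    and v: "v \<in> carrier_vec k" and Av: "A *\<^sub>v v = 0\<^sub>v n"
  shows "v = 0\<^sub>v k"
proof (cases "distinct (cols A)")
  case True
  then have "lin_indpt (set (cols A))"
    using full_rank_lin_indpt[OF A r] by blast
  then show ?thesis using lin_depI[OF A v _ Av True] by blast
next
  case False
  obtain S where S: "maximal S (\<lambda>T. T \<subseteq> set (cols A) \<and> lin_indpt T)"
    using maximal_exists[of "(\<lambda>T. T \<subseteq> set (cols A) \<and> lin_indpt T)" "card (set (cols A))" "{}"]
    by (meson List.finite_set card_mono empty_iff empty_subsetI finite_lin_indpt2 rev_finite_subset)
  then have "card S \<le> card (set (cols A))" by (simp add: card_mono maximal_def)
  moreover have "card (set (cols A)) < k"
    using False card_distinct[of "cols A"] card_length[of "cols A"] A by (auto simp: le_less)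
  ultimately have "card S < k" by simp
  then show ?thesis using rank_card_indpt[OF A S] r by simp
qed


lemma proj_props:
  fixes X :: "real mat"
  assumes X: "X \<in> carrier_mat n p" and g: "g \<subseteq> {0..<p}" and fr: "full_col_rank X g"
  shows "proj X g \<in> carrier_mat n n" "(proj X g)\<^sup>T = proj X g"
    "\<And>y. y \<in> carrier_vec n \<Longrightarrow> proj X g *\<^sub>v (proj X g *\<^sub>v y) = proj X g *\<^sub>v y"
proof -
  define A where "A = colsub X g"
  define k where "k = card g"
  have A: "A \<in> carrier_mat n k" unfolding A_def k_def by (rule colsub_carrier[OF X g])
  have r: "vec_space.rank n A = k" using fr A X unfolding full_col_rank_def A_def by auto
  define G where "G = A\<^sup>T * A"
  have G: "G \<in> carrier_mat k k" unfolding G_def using A by auto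
  have Gsym: "G\<^sup>T = G" unfolding G_def using A by (simp add: transpose_mult[of _ k n])
  have vGv: "v \<bullet> (G *\<^sub>v v) = (A *\<^sub>v v) \<bullet> (A *\<^sub>v v)" if v: "v \<in> carrier_vec k" for v
  proof -
    have "(A *\<^sub>v v) \<bullet> (A *\<^sub>v v) = (A\<^sup>T *\<^sub>v (A *\<^sub>v v)) \<bullet> v"
      using transpose_vec_mult_scalar[OF A v, of "A *\<^sub>v v"] A v by auto
    also have "\<dots> = v \<bullet> (G *\<^sub>v v)" unfolding G_def
      using A v by (subst comm_scalar_prod[of _ k]) auto
    finally show ?thesis by simp
  qed
  have detG: "det G \<noteq> 0"
  proof
    assume "det G = 0"
    then obtain v where v: "v \<in> carrier_vec k" "v \<noteq> 0\<^sub>v k" "G *\<^sub>v v = 0\<^sub>v k"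
      using det_0_iff_vec_prod_zero_field[OF G] by blast
    have "(A *\<^sub>v v) \<bullet> (A *\<^sub>v v) = 0" using vGv[OF v(1)] v by simp
    then have "A *\<^sub>v v = 0\<^sub>v n" using sqn_zero[of "A *\<^sub>v v" n] A by (meson mult_mat_vec_carrier v(1))
    then have "v = 0\<^sub>v k" using vec_space.full_rank_ker[OF A r v(1)] by simp
    then show False using v(2) by simp
  qed
  have "G \<in> Units (ring_mat TYPE(real) k ())" by (rule det_non_zero_imp_unit[OF G detG])
  then obtain Gi where "mat_inverse G = Some Gi" using mat_inverse(1)[OF G, of "()"] by (cases "mat_inverse G") auto
  then have Gi: "G * Gi = 1\<^sub>m k" "Gi * G = 1\<^sub>m k" "Gi \<in> carrier_mat k k" using mat_inverse(2)[OF G] by auto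
  have Gisym: "Gi\<^sup>T = Gi"
  proof -
    have "Gi\<^sup>T * G = (G\<^sup>T * Gi)\<^sup>T" using G Gi by (simp add: transpose_mult[of _ k k])
    also have "\<dots> = 1\<^sub>m k" using Gsym Gi by simp
    finally have 1: "Gi\<^sup>T * G = 1\<^sub>m k" .
    have "Gi\<^sup>T = Gi\<^sup>T * (G * Gi)" using Gi by simp
    also have "\<dots> = (Gi\<^sup>T * G) * Gi" using Gi G by (simp add: assoc_mult_mat[of _ k k _ k _ k])
    also have "\<dots> = Gi" using 1 Gi by simp
    finally show ?thesis .
  qed
  have P: "proj X g = A * Gi * A\<^sup>T" unfolding proj_def A_def[symmetric] G_def[symmetric] Let_def
    using \<open>mat_inverse G = Some Gi\<close> by simp
  show "proj X g \<in> carrier_mat n n" unfolding P using A Gi by auto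
  have "(A * Gi * A\<^sup>T)\<^sup>T = (A\<^sup>T)\<^sup>T * (A * Gi)\<^sup>T"
    by (rule transpose_mult[of _ n k]) (use A Gi in auto)
  also have "\<dots> = A * (Gi\<^sup>T * A\<^sup>T)" using A Gi by (simp add: transpose_mult[of _ n k])
  also have "\<dots> = A * Gi * A\<^sup>T" using A Gi Gisym by (simp add: assoc_mult_mat[of _ n k _ k _ n])
  finally show "(proj X g)\<^sup>T = proj X g" unfolding P .
  have Pv: "proj X g *\<^sub>v y = A *\<^sub>v (Gi *\<^sub>v (A\<^sup>T *\<^sub>v y))" if "y \<in> carrier_vec n" for y
    unfolding P using A Gi that by (simp add: assoc_mult_mat_vec[of _ n _ _ n])
  fix y :: "real vec" assume y: "y \<in> carrier_vec n"
  define z where "z = Gi *\<^sub>v (A\<^sup>T *\<^sub>v y)"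
  have z: "z \<in> carrier_vec k" unfolding z_def using Gi A y by auto
  have "A\<^sup>T *\<^sub>v (A *\<^sub>v z) = G *\<^sub>v z" unfolding G_def using A z by (simp add: assoc_mult_mat_vec[of _ k n _ k])
  moreover have "Gi *\<^sub>v (G *\<^sub>v z) = z" using Gi G z by (simp add: assoc_mult_mat_vec[symmetric, of _ k k _ k])
  ultimately show "proj X g *\<^sub>v (proj X g *\<^sub>v y) = proj X g *\<^sub>v y"
    using Pv[OF y] Pv A z by (simp add: z_def[symmetric])
qed


lemma smult_mat_mult_vec:
  fixes M :: "real mat"
  assumes "M \<in> carrier_mat a b" "v \<in> carrier_vec b"
  shows "(c \<cdot>\<^sub>m M) *\<^sub>v v = c \<cdot>\<^sub>v (M *\<^sub>v v)"
  using assms by (intro eq_vecI) (auto simp: mult_mat_vec_def)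

lemma transpose_smult_mat: "(c \<cdot>\<^sub>m M)\<^sup>T = c \<cdot>\<^sub>m M\<^sup>T"
  by (intro eq_matI) auto

lemma Q_props:
  fixes P :: "real mat"
  assumes P: "P \<in> carrier_mat n n" and Ps: "P\<^sup>T = P"
    and Pi: "\<And>y. y \<in> carrier_vec n \<Longrightarrow> P *\<^sub>v (P *\<^sub>v y) = P *\<^sub>v y"
  shows "(1\<^sub>m n - P)\<^sup>T = 1\<^sub>m n - P"
    "\<And>y. y \<in> carrier_vec n \<Longrightarrow> ((1\<^sub>m n - P) *\<^sub>v y) \<bullet> ((1\<^sub>m n - P) *\<^sub>v y) = y \<bullet> ((1\<^sub>m n - P) *\<^sub>v y)"
proof -
  show "(1\<^sub>m n - P)\<^sup>T = 1\<^sub>m n - P" using P Ps by (subst transpose_minus[of _ n n]) auto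
  fix y :: "real vec" assume y: "y \<in> carrier_vec n"
  have Qy: "(1\<^sub>m n - P) *\<^sub>v y = y - P *\<^sub>v y" using P y by (simp add: minus_mult_distrib_mat_vec[of _ n n])
  have Py: "P *\<^sub>v y \<in> carrier_vec n" using P y by simp
  have "(P *\<^sub>v y) \<bullet> (P *\<^sub>v y) = (P\<^sup>T *\<^sub>v (P *\<^sub>v y)) \<bullet> y"
    using transpose_vec_mult_scalar[OF P y Py] by simp
  also have "\<dots> = (P *\<^sub>v y) \<bullet> y" using Ps Pi[OF y] by simp
  finally have 1: "(P *\<^sub>v y) \<bullet> (P *\<^sub>v y) = (P *\<^sub>v y) \<bullet> y" .
  have 2: "(P *\<^sub>v y) \<bullet> y = y \<bullet> (P *\<^sub>v y)" using Py y by (simp add: comm_scalar_prod[of _ n])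
  show "((1\<^sub>m n - P) *\<^sub>v y) \<bullet> ((1\<^sub>m n - P) *\<^sub>v y) = y \<bullet> ((1\<^sub>m n - P) *\<^sub>v y)"
    unfolding Qy using y Py 1 2
    by (simp add: minus_scalar_prod_distrib[of _ n] scalar_prod_minus_distrib[of _ n])
qed


theorem lemma2:
  fixes X :: "real mat" and \<theta> :: "real vec" and \<phi> :: real
    and n p B :: nat and z :: "nat \<Rightarrow> nat"
    and M :: "nat set set" and \<gamma> \<gamma>t :: "nat set"
  assumes "X \<in> carrier_mat n p"
    and "\<theta> \<in> carrier_vec p"
    and "\<phi> > 0"
    and "\<forall>j<p. z j \<in> {1..B}"
    and "\<forall>g\<in>M. g \<subseteq> {0..<p} \<and> full_col_rank X g"
    and "\<gamma> \<in> M"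
    and "\<gamma>t \<subseteq> supp \<theta>"
    and "\<not> \<gamma>t \<subseteq> \<gamma>"
  shows "mu X \<theta> \<phi> (\<gamma> \<union> \<gamma>t) \<gamma> \<ge>
    real n / \<phi> * rho X \<theta> M *
    (\<Sum>b = 1..B. (let D = blk z \<gamma>t b - blk z \<gamma> b in
        if D = {} then 0 else real (card D) * Min ((\<lambda>i. (\<theta> $ i)\<^sup>2) ` D)))"
proof -
  note X = assms(1) and t = assms(2) and phi = assms(3) and zB = assms(4) and Mh = assms(5)
    and gM = assms(6) and gts = assms(7) and ngt = assms(8)
  have dX: "dim_row X = n" using X by simp
  have g: "\<gamma> \<subseteq> {0..<p}" "full_col_rank X \<gamma>" using Mh gM by auto
  have supp: "supp \<theta> \<subseteq> {0..<p}" unfolding supp_def using t by auto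
  define D where "D = \<gamma>t - \<gamma>"
  have D1: "(\<gamma> \<union> \<gamma>t) - \<gamma> = D" unfolding D_def by auto
  have Dne: "D \<noteq> {}" unfolding D_def using ngt by auto
  define S where "S = supp \<theta> - \<gamma>"
  have DS: "D \<subseteq> S" unfolding D_def S_def using gts by auto
  have Sp: "S \<subseteq> {0..<p}" unfolding S_def using supp by auto
  have Dp: "D \<subseteq> {0..<p}" using DS Sp by auto
  have finS: "finite S" using Sp finite_subset by blast
  have finD: "finite D" using Dp finite_subset by blast
  define k where "k = card S"
  have k: "0 < k" unfolding k_def using finS DS Dne by (metis card_gt_0_iff subset_empty)
  define P where "P = proj X \<gamma>"
  have P: "P \<in> carrier_mat n n" "P\<^sup>T = P" "\<And>y. y \<in> carrier_vec n \<Longrightarrow> P *\<^sub>v (P *\<^sub>v y) = P *\<^sub>v y"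
    unfolding P_def using proj_props[OF X g] by auto
  define Q where "Q = 1\<^sub>m n - P"
  have Q: "Q \<in> carrier_mat n n" "Q\<^sup>T = Q"
    "\<And>y. y \<in> carrier_vec n \<Longrightarrow> (Q *\<^sub>v y) \<bullet> (Q *\<^sub>v y) = y \<bullet> (Q *\<^sub>v y)"
    unfolding Q_def using Q_props[OF P] P(1) by auto
  define y where "y = colsub X D *\<^sub>v vsub \<theta> D"
  have y: "y = vec n (\<lambda>i. \<Sum>j\<in>D. X $$ (i, j) * \<theta> $ j)" unfolding y_def by (rule colsub_mult[OF X t Dp])
  define \<theta>' where "\<theta>' = vec p (\<lambda>j. if j \<in> D then \<theta> $ j else 0)"
  have t': "\<theta>' \<in> carrier_vec p" unfolding \<theta>'_def by simp
  define XS where "XS = colsub X S"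
  have XS: "XS \<in> carrier_mat n k" unfolding XS_def k_def by (rule colsub_carrier[OF X Sp])
  define v where "v = vsub \<theta>' S"
  have v: "v \<in> carrier_vec k" unfolding v_def k_def by (rule vsub_carrier[OF t' Sp])
  have XSv: "XS *\<^sub>v v = y"
  proof -
    have "XS *\<^sub>v v = vec n (\<lambda>i. \<Sum>j\<in>S. X $$ (i, j) * \<theta>' $ j)" unfolding XS_def v_def
      by (rule colsub_mult[OF X t' Sp])
    also have "\<dots> = y" unfolding y
    proof (intro eq_vecI)
      fix i assume "i < dim_vec (vec n (\<lambda>i. \<Sum>j\<in>D. X $$ (i, j) * \<theta> $ j))"
      have "(\<Sum>j\<in>S. X $$ (i, j) * \<theta>' $ j) = (\<Sum>j\<in>D. X $$ (i, j) * \<theta>' $ j)"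
        by (rule sum.mono_neutral_right[OF finS DS]) (use Sp in \<open>auto simp: \<theta>'_def\<close>)
      also have "\<dots> = (\<Sum>j\<in>D. X $$ (i, j) * \<theta> $ j)"
        by (rule sum.cong) (use Dp in \<open>auto simp: \<theta>'_def\<close>)
      finally show "vec n (\<lambda>i. \<Sum>j\<in>S. X $$ (i, j) * \<theta>' $ j) $ i = vec n (\<lambda>i. \<Sum>j\<in>D. X $$ (i, j) * \<theta> $ j) $ i"
        using \<open>i < _\<close> by simp
    qed simp
    finally show ?thesis .
  qed
  have vv: "v \<bullet> v = (\<Sum>j\<in>D. (\<theta> $ j)^2)"
  proof -
    have "v \<bullet> v = (\<Sum>j\<in>S. (\<theta>' $ j)^2)" unfolding v_def by (rule vsub_sqn[OF t' Sp])
    also have "\<dots> = (\<Sum>j\<in>D. (\<theta>' $ j)^2)"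
      by (rule sum.mono_neutral_right[OF finS DS]) (use Sp in \<open>auto simp: \<theta>'_def\<close>)
    also have "\<dots> = (\<Sum>j\<in>D. (\<theta> $ j)^2)"
      by (rule sum.cong) (use Dp in \<open>auto simp: \<theta>'_def\<close>)
    finally show ?thesis .
  qed
  define MM where "MM = XS\<^sup>T * Q * XS"
  have MM: "MM \<in> carrier_mat k k" unfolding MM_def using XS Q by auto
  have yc: "y \<in> carrier_vec n" unfolding y by simp
  have mu_eq: "mu X \<theta> \<phi> (\<gamma> \<union> \<gamma>t) \<gamma> = (1 / \<phi>) * (v \<bullet> (MM *\<^sub>v v))"
  proof -
    have "mu X \<theta> \<phi> (\<gamma> \<union> \<gamma>t) \<gamma> = (1 / \<phi>) * ((Q *\<^sub>v y) \<bullet> (Q *\<^sub>v y))"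
      unfolding mu_def sqnorm_def D1 dX Q_def P_def y_def ..
    also have "(Q *\<^sub>v y) \<bullet> (Q *\<^sub>v y) = y \<bullet> (Q *\<^sub>v y)" by (rule Q(3)[OF yc])
    also have "\<dots> = (XS *\<^sub>v v) \<bullet> (Q *\<^sub>v (XS *\<^sub>v v))" unfolding XSv ..
    also have "\<dots> = (XS\<^sup>T *\<^sub>v (Q *\<^sub>v (XS *\<^sub>v v))) \<bullet> v"
      using transpose_vec_mult_scalar[OF XS v, of "Q *\<^sub>v (XS *\<^sub>v v)"] XS Q v
      by (auto simp: comm_scalar_prod[of "XS *\<^sub>v v" n])
    also have "\<dots> = v \<bullet> (MM *\<^sub>v v)"
    proof -
      have "MM *\<^sub>v v = (XS\<^sup>T * Q) *\<^sub>v (XS *\<^sub>v v)" unfolding MM_def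
        by (rule assoc_mult_mat_vec) (use XS Q v in auto)
      also have "\<dots> = XS\<^sup>T *\<^sub>v (Q *\<^sub>v (XS *\<^sub>v v))"
        by (rule assoc_mult_mat_vec) (use XS Q v in auto)
      finally show ?thesis using XS Q v by (subst comm_scalar_prod[of _ k]) auto
    qed
    finally show ?thesis .
  qed
  define Ag where "Ag = (1 / real n) \<cdot>\<^sub>m ((colsub X (supp \<theta> - \<gamma>))\<^sup>T * (1\<^sub>m n - proj X \<gamma>) * colsub X (supp \<theta> - \<gamma>))"
  have AgMM: "Ag = (1 / real n) \<cdot>\<^sub>m MM" unfolding Ag_def MM_def XS_def S_def Q_def P_def ..
  have Ag: "Ag \<in> carrier_mat k k" unfolding AgMM using MM by simp
  have MMsym: "MM\<^sup>T = MM"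
  proof -
    have "MM\<^sup>T = XS\<^sup>T * (XS\<^sup>T * Q)\<^sup>T" unfolding MM_def
      by (subst transpose_mult[of _ k n]) (use XS Q in auto)
    also have "(XS\<^sup>T * Q)\<^sup>T = Q\<^sup>T * XS" by (subst transpose_mult[of _ k n]) (use XS Q in auto)
    also have "XS\<^sup>T * (Q\<^sup>T * XS) = MM" unfolding MM_def Q(2)
      by (rule assoc_mult_mat[symmetric]) (use XS Q in auto)
    finally show ?thesis .
  qed
  have Agsym: "Ag\<^sup>T = Ag" unfolding AgMM transpose_smult_mat MMsym ..
  have lam: "lambda_min Ag * (v \<bullet> v) \<le> v \<bullet> (Ag *\<^sub>v v)" by (rule lambda_min_bound[OF Ag Agsym k v])
  have rho_le: "rho X \<theta> M \<le> lambda_min Ag"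
  proof -
    let ?f = "\<lambda>g. lambda_min ((1 / real (dim_row X)) \<cdot>\<^sub>m
        ((colsub X (supp \<theta> - g))\<^sup>T * (1\<^sub>m (dim_row X) - proj X g) * colsub X (supp \<theta> - g)))"
    have eq: "{?f g | g. g \<in> M \<and> \<not> supp \<theta> \<subseteq> g} = ?f ` {g \<in> M. \<not> supp \<theta> \<subseteq> g}" by auto
    have "{g \<in> M. \<not> supp \<theta> \<subseteq> g} \<subseteq> Pow {0..<p}" using Mh by auto
    then have fin: "finite {g \<in> M. \<not> supp \<theta> \<subseteq> g}" by (rule finite_subset) simp
    have mem: "\<gamma> \<in> {g \<in> M. \<not> supp \<theta> \<subseteq> g}" using gM gts ngt by auto
    have "rho X \<theta> M = Min (?f ` {g \<in> M. \<not> supp \<theta> \<subseteq> g})" unfolding rho_def eq ..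
    also have "\<dots> \<le> ?f \<gamma>" by (rule Min_le) (use fin mem in auto)
    also have "?f \<gamma> = lambda_min Ag" unfolding Ag_def dX ..
    finally show ?thesis .
  qed
  define T where "T = (\<Sum>b = 1..B. (let D = blk z \<gamma>t b - blk z \<gamma> b in
        if D = {} then 0 else real (card D) * Min ((\<lambda>i. (\<theta> $ i)\<^sup>2) ` D)))"
  have Db: "blk z \<gamma>t b - blk z \<gamma> b = {j \<in> D. z j = b}" for b unfolding blk_def D_def by auto
  have term_le: "(let Db = blk z \<gamma>t b - blk z \<gamma> b in
        if Db = {} then 0 else real (card Db) * Min ((\<lambda>i. (\<theta> $ i)\<^sup>2) ` Db))
      \<le> (\<Sum>j\<in>{j \<in> D. z j = b}. (\<theta> $ j)^2)" for b
  proof -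
    have fin: "finite {j \<in> D. z j = b}" using finD by simp
    let ?E = "{j \<in> D. z j = b}"
    show ?thesis
    proof (cases "?E = {}")
      case True then show ?thesis unfolding Db Let_def True by simp
    next
      case False
      have "\<And>i. i \<in> ?E \<Longrightarrow> Min ((\<lambda>i. (\<theta> $ i)\<^sup>2) ` ?E) \<le> (\<theta> $ i)^2"
        by (rule Min_le) (use fin in auto)
      then have "real (card ?E) * Min ((\<lambda>i. (\<theta> $ i)\<^sup>2) ` ?E) \<le> (\<Sum>j\<in>?E. (\<theta> $ j)^2)"
        by (rule sum_bounded_below)
      then show ?thesis unfolding Db Let_def if_not_P[OF False] .
    qed
  qed
  have term_ge: "0 \<le> (let Db = blk z \<gamma>t b - blk z \<gamma> b in
        if Db = {} then 0 else real (card Db) * Min ((\<lambda>i. (\<theta> $ i)\<^sup>2) ` Db))" for b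
  proof -
    have fin: "finite {j \<in> D. z j = b}" using finD by simp
    let ?E = "{j \<in> D. z j = b}"
    show ?thesis
    proof (cases "?E = {}")
      case True then show ?thesis unfolding Db Let_def True by simp
    next
      case False
      have "Min ((\<lambda>i. (\<theta> $ i)\<^sup>2) ` ?E) \<in> (\<lambda>i. (\<theta> $ i)\<^sup>2) ` ?E"
        by (rule Min_in) (use fin False in auto)
      then have "0 \<le> Min ((\<lambda>i. (\<theta> $ i)\<^sup>2) ` ?E)" by auto
      then have "0 \<le> real (card ?E) * Min ((\<lambda>i. (\<theta> $ i)\<^sup>2) ` ?E)" by simp
      then show ?thesis unfolding Db Let_def if_not_P[OF False] .
    qed
  qed
  have T0: "0 \<le> T" unfolding T_def by (intro sum_nonneg term_ge)
  have "T \<le> (\<Sum>b = 1..B. \<Sum>j\<in>{j \<in> D. z j = b}. (\<theta> $ j)^2)" unfolding T_def by (intro sum_mono term_le)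
  also have "\<dots> = (\<Sum>j\<in>D. (\<theta> $ j)^2)"
    by (rule sum.group[OF finD]) (use zB Dp in auto)
  finally have Tv: "T \<le> v \<bullet> v" unfolding vv .
  have mu0: "0 \<le> mu X \<theta> \<phi> (\<gamma> \<union> \<gamma>t) \<gamma>" unfolding mu_def sqnorm_def using phi sqn_nonneg by simp
  have final: "real n / \<phi> * rho X \<theta> M * T \<le> mu X \<theta> \<phi> (\<gamma> \<union> \<gamma>t) \<gamma>"
  proof (cases "n = 0 \<or> rho X \<theta> M \<le> 0")
    case True
    have "real n / \<phi> * rho X \<theta> M * T \<le> 0"
    proof (cases "n = 0")
      case True then show ?thesis by simp
    next
      case False
      then have r: "rho X \<theta> M \<le> 0" using \<open>n = 0 \<or> rho X \<theta> M \<le> 0\<close> by simp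
      have a: "0 \<le> real n / \<phi>" using phi by simp
      have "real n / \<phi> * rho X \<theta> M \<le> 0" by (rule mult_nonneg_nonpos[OF a r])
      then show ?thesis by (rule mult_nonpos_nonneg[OF _ T0])
    qed
    then show ?thesis using mu0 by linarith
  next
    case False
    then have n: "n > 0" and r: "rho X \<theta> M > 0" by auto
    have "real n / \<phi> * rho X \<theta> M * T \<le> real n / \<phi> * rho X \<theta> M * (v \<bullet> v)"
      using Tv n r phi by (intro mult_left_mono) auto
    also have "\<dots> \<le> real n / \<phi> * (lambda_min Ag * (v \<bullet> v))"
    proof -
      have "rho X \<theta> M * (v \<bullet> v) \<le> lambda_min Ag * (v \<bullet> v)"
        by (rule mult_right_mono[OF rho_le sqn_nonneg])
      moreover have "0 \<le> real n / \<phi>" using phi by simp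
      ultimately have "real n / \<phi> * (rho X \<theta> M * (v \<bullet> v)) \<le> real n / \<phi> * (lambda_min Ag * (v \<bullet> v))"
        by (rule mult_left_mono)
      then show ?thesis by (simp add: mult.assoc)
    qed
    also have "\<dots> \<le> real n / \<phi> * (v \<bullet> (Ag *\<^sub>v v))"
      using lam n phi by (intro mult_left_mono) auto
    also have "v \<bullet> (Ag *\<^sub>v v) = (1 / real n) * (v \<bullet> (MM *\<^sub>v v))"
      unfolding AgMM using MM v by (simp add: smult_mat_mult_vec[OF MM v])
    also have "real n / \<phi> * ((1 / real n) * (v \<bullet> (MM *\<^sub>v v))) = mu X \<theta> \<phi> (\<gamma> \<union> \<gamma>t) \<gamma>"
      unfolding mu_eq using n by simp
    finally show ?thesis .
  qed
  then show ?thesis unfolding T_def .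
qed

end
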